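(* Let $\mathcal{O}$ be a nonsymmetric operad and $\mathcal{O}^{\mathrm{Dend}}$ the associated operad. Define $\varphi_n:\mathcal{O}^{\mathrm{Dend}}(n)\to\mathcal{O}(n)$ by $\varphi_n(f^{[1]},\dots,f^{[n]})=f^{[1]}+\cdots+f^{[n]}$. Then $\varphi=\{\varphi_n\}_{n\ge1}:\mathcal{O}^{\mathrm{Dend}}\to\mathcal{O}$ is a morphism of nonsymmetric operads. In particular, if $(\pi_\prec,\pi_\succ)$ is a dendriform-multiplication on $\mathcal{O}$, then $\varphi$ induces a morphism of Gerstenhaber algebras $\varphi_*:H^\bullet_{(\pi_\prec,\pi_\succ)}(\mathcal{O}^{\mathrm{Dend}})\to H^\bullet_{\pi_{\mathrm{Tot}}}(\mathcal{O})$, where $\pi_{\mathrm{Tot}}=\pi_\prec+\pi_\succ$.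
   Context: $\mathbf{k}$ is a commutative unital ring of characteristic $0$; a nonsymmetric operad consists of $\mathbf{k}$-modules $\mathcal{O}(n)$, bilinear partial compositions $\circ_i$ and unit $\mathds{1}$ with the usual axioms; a morphism of operads is a family of linear maps commuting with all $\circ_i$ and preserving units. $C_n=\{[1],\dots,[n]\}$ formal symbols; $\mathcal{O}^{\mathrm{Dend}}(n)=\mathbf{k}[C_n]\otimes\mathcal{O}(n)$ with elements $f=(f^{[1]},\dots,f^{[n]})$, $f^{[r]}\in\mathcal{O}(n)$; partial compositions $(f\circ_i^{\mathrm{Dend}}g)^{[r]}=f^{R_0[r]}\circ_i g^{R_i[r]}$ for $1\le r\le m+n-1$, where $R_0[r]=[r]$ if $r\le i-1$, $[i]$ if $i\le r\le i+n-1$, $[r-n+1]$ if $r\ge i+n$; $R_i[r]=[r-i+1]$ if $i\le r\le i+n-1$ and $[1]+\cdots+[n]$ otherwise, with $g^{[1]+\cdots+[n]}:=g^{[1]}+\cdots+g^{[n]}$; unit $\mathds{1}^{[1]}$. A dendriform-multiplication is a pair $(\pi_\prec,\pi_\succ)$ in $\mathcal{O}(2)$ with $\pi_\prec\circ_1\pi_\prec=\pi_\prec\circ_2(\pi_\prec+\pi_\succ)$, $\pi_\prec\circ_1\pi_\succ=\pi_\succ\circ_2\pi_\prec$, $\pi_\succ\circ_1(\pi_\prec+\pi_\succ)=\pi_\succ\circ_2\pi_\succ$; then $(\pi_\prec,\pi_\succ)$ is a multiplication (i.e. $\pi\circ_1\pi=\pi\circ_2\pi$) on $\mathcal{O}^{\mathrm{Dend}}$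 and $\pi_\prec+\pi_\succ$ is a multiplication on $\mathcal{O}$. For an operad $\mathcal{P}$ with multiplication $\pi$: $\llbracket f,g\rrbracket=\sum_{i=1}^m(-1)^{(n-1)(i-1)}f\circ_i g-(-1)^{(m-1)(n-1)}\sum_{i=1}^n(-1)^{(m-1)(i-1)}g\circ_i f$ ($f\in\mathcal{P}(m)$, $g\in\mathcal{P}(n)$), $f\smile_\pi g=(-1)^{mn+1}(\pi\circ_2 g)\circ_1 f$, $\delta_\pi=\llbracket\pi,-\rrbracket$, and $H^\bullet_\pi(\mathcal{P})$ is the cohomology of $(\mathcal{P}(n),\delta_\pi)_{n\ge1}$, which is a Gerstenhaber algebra (graded-commutative associative product of degree $0$ plus a degree $-1$ graded Lie bracket satisfying the graded Leibniz rule) with product and bracket induced by $\smile_\pi$ and $\llbracket\,,\,\rrbracket$. $H^\bullet_{(\pi_\prec,\pi_\succ)}(\mathcal{O}^{\mathrm{Dend}})$ denotes $H^\bullet_{(\pi_\prec,\pi_\succ)}$ computed in $\mathcal{O}^{\mathrm{Dend}}$. A Gerstenhaber algebra morphism is a degree-preserving linear map preserving product and bracket. *)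

theory Defs
  imports Complex_Main "HOL-Library.Function_Algebras"
begin

text \<open>An operad is given by: a scalar action sc of the ring 'k on an ambient abelian
group 'a (a k-module), submodules P n (n \<ge> 1) of arity-n operations, partial compositions
cp m n i f g = f \<circ>_i g (for f of arity m, g of arity n, 1 \<le> i \<le> m), and a unit u.\<close>

definition ns_operad ::
  "('k::comm_ring_1 \<Rightarrow> 'a::ab_group_add \<Rightarrow> 'a) \<Rightarrow> (nat \<Rightarrow> 'a set)
   \<Rightarrow> (nat \<Rightarrow> nat \<Rightarrow> nat \<Rightarrow> 'a \<Rightarrow> 'a \<Rightarrow> 'a) \<Rightarrow> 'a \<Rightarrow> bool" where
  "ns_operad sc P cp u \<longleftrightarrow>
     module sc \<and>
     (\<forall>n\<ge>1. 0 \<in> P n \<and> (\<forall>x\<in>P n. \<forall>y\<in>P n. x + y \<in> P n) \<and> (\<forall>c. \<forall>x\<in>P n. sc c x \<in> P n)) \<and>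
     u \<in> P 1 \<and>
     (\<forall>m n i f g. 1 \<le> n \<longrightarrow> 1 \<le> i \<longrightarrow> i \<le> m \<longrightarrow> f \<in> P m \<longrightarrow> g \<in> P n \<longrightarrow>
        cp m n i f g \<in> P (m + n - 1)) \<and>
     (\<forall>m n i f f' g. 1 \<le> n \<longrightarrow> 1 \<le> i \<longrightarrow> i \<le> m \<longrightarrow> f \<in> P m \<longrightarrow> f' \<in> P m \<longrightarrow> g \<in> P n \<longrightarrow>
        cp m n i (f + f') g = cp m n i f g + cp m n i f' g) \<and>
     (\<forall>m n i f g g'. 1 \<le> n \<longrightarrow> 1 \<le> i \<longrightarrow> i \<le> m \<longrightarrow> f \<in> P m \<longrightarrow> g \<in> P n \<longrightarrow> g' \<in> P n \<longrightarrow>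
        cp m n i f (g + g') = cp m n i f g + cp m n i f g') \<and>
     (\<forall>m n i c f g. 1 \<le> n \<longrightarrow> 1 \<le> i \<longrightarrow> i \<le> m \<longrightarrow> f \<in> P m \<longrightarrow> g \<in> P n \<longrightarrow>
        cp m n i (sc c f) g = sc c (cp m n i f g) \<and> cp m n i f (sc c g) = sc c (cp m n i f g)) \<and>
     \<comment> \<open>sequential associativity: (f \<circ>_i g) \<circ>_{i+j-1} h = f \<circ>_i (g \<circ>_j h)\<close>
     (\<forall>m n p i j f g h. 1 \<le> n \<longrightarrow> 1 \<le> p \<longrightarrow> 1 \<le> i \<longrightarrow> i \<le> m \<longrightarrow> 1 \<le> j \<longrightarrow> j \<le> n \<longrightarrow>
        f \<in> P m \<longrightarrow> g \<in> P n \<longrightarrow> h \<in> P p \<longrightarrow>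
        cp (m + n - 1) p (i + j - 1) (cp m n i f g) h = cp m (n + p - 1) i f (cp n p j g h)) \<and>
     \<comment> \<open>parallel associativity: (f \<circ>_i g) \<circ>_{k+n-1} h = (f \<circ>_k h) \<circ>_i g for i < k\<close>
     (\<forall>m n p i k f g h. 1 \<le> n \<longrightarrow> 1 \<le> p \<longrightarrow> 1 \<le> i \<longrightarrow> i < k \<longrightarrow> k \<le> m \<longrightarrow>
        f \<in> P m \<longrightarrow> g \<in> P n \<longrightarrow> h \<in> P p \<longrightarrow>
        cp (m + n - 1) p (k + n - 1) (cp m n i f g) h = cp (m + p - 1) n i (cp m p k f h) g) \<and>
     \<comment> \<open>unit axioms\<close>
     (\<forall>n f. 1 \<le> n \<longrightarrow> f \<in> P n \<longrightarrow> cp 1 n 1 u f = f) \<and>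
     (\<forall>m i f. 1 \<le> i \<longrightarrow> i \<le> m \<longrightarrow> f \<in> P m \<longrightarrow> cp m 1 i f u = f)"

definition ns_operad_hom ::
  "('k::comm_ring_1 \<Rightarrow> 'a::ab_group_add \<Rightarrow> 'a) \<Rightarrow> (nat \<Rightarrow> 'a set)
   \<Rightarrow> (nat \<Rightarrow> nat \<Rightarrow> nat \<Rightarrow> 'a \<Rightarrow> 'a \<Rightarrow> 'a) \<Rightarrow> 'a
   \<Rightarrow> ('k \<Rightarrow> 'b::ab_group_add \<Rightarrow> 'b) \<Rightarrow> (nat \<Rightarrow> 'b set)
   \<Rightarrow> (nat \<Rightarrow> nat \<Rightarrow> nat \<Rightarrow> 'b \<Rightarrow> 'b \<Rightarrow> 'b) \<Rightarrow> 'b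
   \<Rightarrow> (nat \<Rightarrow> 'a \<Rightarrow> 'b) \<Rightarrow> bool" where
  "ns_operad_hom sc1 P1 cp1 u1 sc2 P2 cp2 u2 F \<longleftrightarrow>
     (\<forall>n\<ge>1. \<forall>f\<in>P1 n. F n f \<in> P2 n) \<and>
     (\<forall>n\<ge>1. \<forall>f\<in>P1 n. \<forall>g\<in>P1 n. F n (f + g) = F n f + F n g) \<and>
     (\<forall>n\<ge>1. \<forall>c. \<forall>f\<in>P1 n. F n (sc1 c f) = sc2 c (F n f)) \<and>
     (\<forall>m n i f g. 1 \<le> n \<longrightarrow> 1 \<le> i \<longrightarrow> i \<le> m \<longrightarrow> f \<in> P1 m \<longrightarrow> g \<in> P1 n \<longrightarrow>
        F (m + n - 1) (cp1 m n i f g) = cp2 m n i (F m f) (F n g)) \<and>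
     F 1 u1 = u2"

text \<open>An element f = (f^[1],...,f^[n]) of P^Dend(n) is represented as a function
r \<mapsto> f^[r], with f^[r] \<in> P(n) for 1 \<le> r \<le> n and f^[r] = 0 otherwise.\<close>

definition dend_scale :: "('k \<Rightarrow> 'a \<Rightarrow> 'a) \<Rightarrow> 'k \<Rightarrow> (nat \<Rightarrow> 'a) \<Rightarrow> (nat \<Rightarrow> 'a)" where
  "dend_scale sc c f = (\<lambda>r. sc c (f r))"

definition dend_O :: "(nat \<Rightarrow> 'a::zero set) \<Rightarrow> nat \<Rightarrow> (nat \<Rightarrow> 'a) set" where
  "dend_O P n = {f. (\<forall>r\<in>{1..n}. f r \<in> P n) \<and> (\<forall>r. r \<notin> {1..n} \<longrightarrow> f r = 0)}"

definition R0 :: "nat \<Rightarrow> nat \<Rightarrow> nat \<Rightarrow> nat" where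
  "R0 n i r = (if r \<le> i - 1 then r else if r \<le> i + n - 1 then i else r - n + 1)"

definition dend_comp ::
  "(nat \<Rightarrow> nat \<Rightarrow> nat \<Rightarrow> 'a \<Rightarrow> 'a \<Rightarrow> 'a::comm_monoid_add)
   \<Rightarrow> nat \<Rightarrow> nat \<Rightarrow> nat \<Rightarrow> (nat \<Rightarrow> 'a) \<Rightarrow> (nat \<Rightarrow> 'a) \<Rightarrow> (nat \<Rightarrow> 'a)" where
  "dend_comp cp m n i f g = (\<lambda>r.
     if 1 \<le> r \<and> r \<le> m + n - 1 then
       cp m n i (f (R0 n i r))
         (if i \<le> r \<and> r \<le> i + n - 1 then g (r - i + 1) else (\<Sum>s = 1..n. g s))
     else 0)"

definition dend_unit :: "'a \<Rightarrow> (nat \<Rightarrow> 'a::zero)" where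
  "dend_unit u = (\<lambda>r. if r = 1 then u else 0)"

definition phi :: "nat \<Rightarrow> (nat \<Rightarrow> 'a::comm_monoid_add) \<Rightarrow> 'a" where
  "phi n f = (\<Sum>r = 1..n. f r)"

definition dend_pair :: "'a \<Rightarrow> 'a \<Rightarrow> (nat \<Rightarrow> 'a::zero)" where
  "dend_pair pl pr = (\<lambda>r. if r = 1 then pl else if r = 2 then pr else 0)"

definition dendriform_mult ::
  "(nat \<Rightarrow> 'a set) \<Rightarrow> (nat \<Rightarrow> nat \<Rightarrow> nat \<Rightarrow> 'a \<Rightarrow> 'a \<Rightarrow> 'a::ab_group_add) \<Rightarrow> 'a \<Rightarrow> 'a \<Rightarrow> bool" where
  "dendriform_mult P cp pl pr \<longleftrightarrow> pl \<in> P 2 \<and> pr \<in> P 2 \<and>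
     cp 2 2 1 pl pl = cp 2 2 2 pl (pl + pr) \<and>
     cp 2 2 1 pl pr = cp 2 2 2 pr pl \<and>
     cp 2 2 1 pr (pl + pr) = cp 2 2 2 pr pr"

definition sgnx :: "nat \<Rightarrow> 'a::group_add \<Rightarrow> 'a" where
  "sgnx e x = (if even e then x else - x)"

definition gbr :: "(nat \<Rightarrow> nat \<Rightarrow> nat \<Rightarrow> 'a \<Rightarrow> 'a \<Rightarrow> 'a::ab_group_add)
   \<Rightarrow> nat \<Rightarrow> nat \<Rightarrow> 'a \<Rightarrow> 'a \<Rightarrow> 'a" where
  "gbr cp m n f g =
     (\<Sum>i = 1..m. sgnx ((n - 1) * (i - 1)) (cp m n i f g))
     - sgnx ((m - 1) * (n - 1)) (\<Sum>i = 1..n. sgnx ((m - 1) * (i - 1)) (cp n m i g f))"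

definition cupp :: "(nat \<Rightarrow> nat \<Rightarrow> nat \<Rightarrow> 'a \<Rightarrow> 'a \<Rightarrow> 'a::ab_group_add)
   \<Rightarrow> 'a \<Rightarrow> nat \<Rightarrow> nat \<Rightarrow> 'a \<Rightarrow> 'a \<Rightarrow> 'a" where
  "cupp cp p m n f g = sgnx (m * n + 1) (cp (n + 1) m 1 (cp 2 n 2 p g) f)"

definition delta :: "(nat \<Rightarrow> nat \<Rightarrow> nat \<Rightarrow> 'a \<Rightarrow> 'a \<Rightarrow> 'a::ab_group_add)
   \<Rightarrow> 'a \<Rightarrow> nat \<Rightarrow> 'a \<Rightarrow> 'a" where
  "delta cp p n f = gbr cp 2 n p f"

definition cocycles :: "(nat \<Rightarrow> 'a set) \<Rightarrow> (nat \<Rightarrow> nat \<Rightarrow> nat \<Rightarrow> 'a \<Rightarrow> 'a \<Rightarrow> 'a::ab_group_add)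
   \<Rightarrow> 'a \<Rightarrow> nat \<Rightarrow> 'a set" where
  "cocycles P cp p n = {f \<in> P n. delta cp p n f = 0}"

text \<open>Coboundaries in degree n (the complex starts in degree 1, so B^1 = 0).\<close>
definition coboundaries :: "(nat \<Rightarrow> 'a set) \<Rightarrow> (nat \<Rightarrow> nat \<Rightarrow> nat \<Rightarrow> 'a \<Rightarrow> 'a \<Rightarrow> 'a::ab_group_add)
   \<Rightarrow> 'a \<Rightarrow> nat \<Rightarrow> 'a set" where
  "coboundaries P cp p n =
     (if 2 \<le> n then delta cp p (n - 1) ` P (n - 1) else {0})"

definition coh_class :: "(nat \<Rightarrow> 'a set) \<Rightarrow> (nat \<Rightarrow> nat \<Rightarrow> nat \<Rightarrow> 'a \<Rightarrow> 'a \<Rightarrow> 'a::ab_group_add)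
   \<Rightarrow> 'a \<Rightarrow> nat \<Rightarrow> 'a \<Rightarrow> 'a set" where
  "coh_class P cp p n f = (\<lambda>b. f + b) ` coboundaries P cp p n"

definition cohomology :: "(nat \<Rightarrow> 'a set) \<Rightarrow> (nat \<Rightarrow> nat \<Rightarrow> nat \<Rightarrow> 'a \<Rightarrow> 'a \<Rightarrow> 'a::ab_group_add)
   \<Rightarrow> 'a \<Rightarrow> nat \<Rightarrow> 'a set set" where
  "cohomology P cp p n = coh_class P cp p n ` cocycles P cp p n"

end

theory Submission
  imports Defs
begin

lemma sum_fun_apply: "(\<Sum>x\<in>S. F x) r = (\<Sum>x\<in>S. (F x) r)"
  by (induct S rule: infinite_finite_induct) auto

lemma phi_add: "phi n (f + g) = phi n f + phi n g"
  by (simp add: phi_def sum.distrib)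
lemma phi_neg: "phi n (- (f::nat \<Rightarrow> 'a::ab_group_add)) = - phi n f"
  by (simp add: phi_def sum_negf)
lemma phi_diff: "phi n ((f::nat \<Rightarrow> 'a::ab_group_add) - g) = phi n f - phi n g"
  by (simp add: phi_def sum_subtractf)
lemma phi_zero: "phi n 0 = 0"
  by (simp add: phi_def)
lemma phi_sum: "phi n (\<Sum>x\<in>S. F x) = (\<Sum>x\<in>S. phi n (F x))"
  unfolding phi_def sum_fun_apply by (rule sum.swap)
lemma phi_sgnx: "phi n (sgnx e (f::nat \<Rightarrow> 'a::ab_group_add)) = sgnx e (phi n f)"
  by (simp add: sgnx_def phi_neg)

lemma sgnx_add: "sgnx e (a + b) = sgnx e a + sgnx e (b::'a::ab_group_add)"
  by (simp add: sgnx_def)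
lemma sgnx_neg: "sgnx e (- a) = - sgnx e (a::'a::ab_group_add)"
  by (simp add: sgnx_def)
lemma sgnx_zero: "sgnx e 0 = (0::'a::ab_group_add)"
  by (simp add: sgnx_def)

lemma class_eq_diff:
  assumes "(\<lambda>b. x + b) ` B = (\<lambda>b. y + b) ` B" "0 \<in> B"
  shows "x - y \<in> (B :: 'a::ab_group_add set)"
proof -
  have "x \<in> (\<lambda>b. y + b) ` B" using assms by (metis add.right_neutral image_eqI)
  then obtain b where "b \<in> B" "x = y + b" by auto
  then show ?thesis by simp
qed

lemma diff_class_eq:
  assumes "x - y \<in> B" "\<And>a b. a \<in> B \<Longrightarrow> b \<in> B \<Longrightarrow> a + b \<in> B" "\<And>a. a \<in> B \<Longrightarrow> - a \<in> B"
  shows "(\<lambda>b. x + b) ` B = (\<lambda>b. y + b) ` (B :: 'a::ab_group_add set)"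
proof
  show "(\<lambda>b. x + b) ` B \<subseteq> (\<lambda>b. y + b) ` B"
  proof
    fix z assume "z \<in> (\<lambda>b. x + b) ` B"
    then obtain b where b: "b \<in> B" "z = x + b" by auto
    have "(x - y) + b \<in> B" using assms b by auto
    moreover have "z = y + ((x - y) + b)" using b by simp
    ultimately show "z \<in> (\<lambda>b. y + b) ` B" by blast
  qed
next
  show "(\<lambda>b. y + b) ` B \<subseteq> (\<lambda>b. x + b) ` B"
  proof
    fix z assume "z \<in> (\<lambda>b. y + b) ` B"
    then obtain b where b: "b \<in> B" "z = y + b" by auto
    have "- (x - y) \<in> B" using assms by blast
    then have "- (x - y) + b \<in> B" using assms b by blast
    moreover have "z = x + (- (x - y) + b)" using b by simp
    ultimately show "z \<in> (\<lambda>b. x + b) ` B" by blast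
  qed
qed

context
  fixes sc :: "'k::comm_ring_1 \<Rightarrow> 'a::ab_group_add \<Rightarrow> 'a"
    and P :: "nat \<Rightarrow> 'a set"
    and cp :: "nat \<Rightarrow> nat \<Rightarrow> nat \<Rightarrow> 'a \<Rightarrow> 'a \<Rightarrow> 'a"
    and u :: 'a
  assumes op: "ns_operad sc P cp u"
begin

lemma md: "module sc" using op unfolding ns_operad_def by auto
lemma P0: "1 \<le> n \<Longrightarrow> 0 \<in> P n" using op unfolding ns_operad_def by auto
lemma Padd: "1 \<le> n \<Longrightarrow> x \<in> P n \<Longrightarrow> y \<in> P n \<Longrightarrow> x + y \<in> P n" using op unfolding ns_operad_def by auto
lemma Psc: "1 \<le> n \<Longrightarrow> x \<in> P n \<Longrightarrow> sc c x \<in> P n" using op unfolding ns_operad_def by auto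
lemma Pneg: "1 \<le> n \<Longrightarrow> x \<in> P n \<Longrightarrow> - x \<in> P n"
  using Psc[of n x "-1"] module.scale_minus_left[OF md, of 1 x] module.scale_one[OF md, of x] by simp
lemma Psum: "1 \<le> n \<Longrightarrow> (\<And>x. x \<in> S \<Longrightarrow> F x \<in> P n) \<Longrightarrow> (\<Sum>x\<in>S. F x) \<in> P n"
  by (induct S rule: infinite_finite_induct) (auto simp: P0 Padd)
lemma Pu: "u \<in> P 1" using op unfolding ns_operad_def by auto
lemma cpP: "1 \<le> n \<Longrightarrow> 1 \<le> i \<Longrightarrow> i \<le> m \<Longrightarrow> f \<in> P m \<Longrightarrow> g \<in> P n \<Longrightarrow> cp m n i f g \<in> P (m + n - 1)"
  using op unfolding ns_operad_def by auto
lemma cpL: "1 \<le> n \<Longrightarrow> 1 \<le> i \<Longrightarrow> i \<le> m \<Longrightarrow> f \<in> P m \<Longrightarrow> f' \<in> P m \<Longrightarrow> g \<in> P n \<Longrightarrow>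
        cp m n i (f + f') g = cp m n i f g + cp m n i f' g"
  using op unfolding ns_operad_def by auto
lemma cpR: "1 \<le> n \<Longrightarrow> 1 \<le> i \<Longrightarrow> i \<le> m \<Longrightarrow> f \<in> P m \<Longrightarrow> g \<in> P n \<Longrightarrow> g' \<in> P n \<Longrightarrow>
        cp m n i f (g + g') = cp m n i f g + cp m n i f g'"
  using op unfolding ns_operad_def by auto
lemma cp0L: "1 \<le> n \<Longrightarrow> 1 \<le> i \<Longrightarrow> i \<le> m \<Longrightarrow> g \<in> P n \<Longrightarrow> cp m n i 0 g = 0"
  using cpL[of n i m 0 0 g] P0[of m] by simp
lemma cp0R: "1 \<le> n \<Longrightarrow> 1 \<le> i \<Longrightarrow> i \<le> m \<Longrightarrow> f \<in> P m \<Longrightarrow> cp m n i f 0 = 0"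
  using cpR[of n i m f 0 0] P0[of n] by simp
lemma cpnegL: "1 \<le> n \<Longrightarrow> 1 \<le> i \<Longrightarrow> i \<le> m \<Longrightarrow> f \<in> P m \<Longrightarrow> g \<in> P n \<Longrightarrow> cp m n i (- f) g = - cp m n i f g"
  using cpL[of n i m f "-f" g] cp0L[of n i m g] Pneg[of m f] by (simp add: eq_neg_iff_add_eq_0 add.commute)
lemma cpnegR: "1 \<le> n \<Longrightarrow> 1 \<le> i \<Longrightarrow> i \<le> m \<Longrightarrow> f \<in> P m \<Longrightarrow> g \<in> P n \<Longrightarrow> cp m n i f (- g) = - cp m n i f g"
  using cpR[of n i m f g "-g"] cp0R[of n i m f] Pneg[of n g] by (simp add: eq_neg_iff_add_eq_0 add.commute)
lemma cpsumL: "1 \<le> n \<Longrightarrow> 1 \<le> i \<Longrightarrow> i \<le> m \<Longrightarrow> (\<And>x. x \<in> S \<Longrightarrow> F x \<in> P m) \<Longrightarrow> g \<in> P n \<Longrightarrow>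
   cp m n i (\<Sum>x\<in>S. F x) g = (\<Sum>x\<in>S. cp m n i (F x) g)"
proof (induct S rule: infinite_finite_induct)
  case (infinite A) then show ?case using cp0L by simp
next
  case empty then show ?case using cp0L by simp
next
  case (insert x F) then show ?case
    by (simp add: cpL Psum)
qed
lemma cpsumR: "1 \<le> n \<Longrightarrow> 1 \<le> i \<Longrightarrow> i \<le> m \<Longrightarrow> f \<in> P m \<Longrightarrow> (\<And>x. x \<in> S \<Longrightarrow> G x \<in> P n) \<Longrightarrow>
   cp m n i f (\<Sum>x\<in>S. G x) = (\<Sum>x\<in>S. cp m n i f (G x))"
proof (induct S rule: infinite_finite_induct)
  case (infinite A) then show ?case using cp0R by simp
next
  case empty then show ?case using cp0R by simp
next
  case (insert x F) then show ?case
    by (simp add: cpR Psum)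
qed


lemma dO_mem: "f \<in> dend_O P n \<Longrightarrow> 1 \<le> r \<Longrightarrow> r \<le> n \<Longrightarrow> f r \<in> P n"
  by (auto simp: dend_O_def)
lemma dO_out: "f \<in> dend_O P n \<Longrightarrow> \<not> (1 \<le> r \<and> r \<le> n) \<Longrightarrow> f r = 0"
  by (auto simp: dend_O_def)
lemma phiP: "1 \<le> n \<Longrightarrow> f \<in> dend_O P n \<Longrightarrow> phi n f \<in> P n"
  unfolding phi_def by (rule Psum) (auto intro: dO_mem)

lemma R0_range: "1 \<le> n \<Longrightarrow> 1 \<le> i \<Longrightarrow> i \<le> m \<Longrightarrow> 1 \<le> r \<Longrightarrow> r \<le> m + n - 1 \<Longrightarrow>
   1 \<le> R0 n i r \<and> R0 n i r \<le> m"
  by (auto simp: R0_def)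

lemma dcP: assumes "1 \<le> n" "1 \<le> i" "i \<le> m" "f \<in> dend_O P m" "g \<in> dend_O P n"
  shows "dend_comp cp m n i f g \<in> dend_O P (m + n - 1)"
proof -
  have G: "(\<Sum>s = 1..n. g s) \<in> P n" by (rule Psum) (use assms in \<open>auto intro: dO_mem\<close>)
  have "cp m n i (f (R0 n i r))
         (if i \<le> r \<and> r \<le> i + n - 1 then g (r - i + 1) else (\<Sum>s = 1..n. g s)) \<in> P (m + n - 1)"
    if "1 \<le> r" "r \<le> m + n - 1" for r
  proof (rule cpP)
    show "f (R0 n i r) \<in> P m" using R0_range[OF assms(1-3) that] assms(4) dO_mem by blast
    show "(if i \<le> r \<and> r \<le> i + n - 1 then g (r - i + 1) else (\<Sum>s = 1..n. g s)) \<in> P n"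
      using G assms(5) assms(1) dO_mem[of g n "r - i + 1"] by auto
  qed (use assms in auto)
  then show ?thesis unfolding dend_O_def dend_comp_def by auto
qed

lemma phi_comp: assumes n1: "1 \<le> n" and i1: "1 \<le> i" and im: "i \<le> m"
  and f: "f \<in> dend_O P m" and g: "g \<in> dend_O P n"
  shows "phi (m + n - 1) (dend_comp cp m n i f g) = cp m n i (phi m f) (phi n g)"
proof -
  define G where "G = (\<Sum>s = 1..n. g s)"
  have GP: "G \<in> P n" unfolding G_def by (rule Psum) (use assms in \<open>auto intro: dO_mem\<close>)
  define T where "T r = cp m n i (f (R0 n i r))
         (if i \<le> r \<and> r \<le> i + n - 1 then g (r - i + 1) else G)" for r
  have "phi (m + n - 1) (dend_comp cp m n i f g) = (\<Sum>r = 1..m + n - 1. T r)"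
    unfolding phi_def dend_comp_def T_def G_def by (rule sum.cong) auto
  also have "{1..m + n - 1} = {1..<i} \<union> ({i..i + n - 1} \<union> {i + n..m + n - 1})"
    using assms by auto
  also have "(\<Sum>r \<in> {1..<i} \<union> ({i..i + n - 1} \<union> {i + n..m + n - 1}). T r)
     = (\<Sum>r \<in> {1..<i}. T r) + ((\<Sum>r \<in> {i..i + n - 1}. T r) + (\<Sum>r \<in> {i + n..m + n - 1}. T r))"
  proof -
    have d1: "{1..<i} \<inter> ({i..i + n - 1} \<union> {i + n..m + n - 1}) = {}" by auto
    have d2: "{i..i + n - 1} \<inter> {i + n..m + n - 1} = {}" using n1 by auto
    have e1: "(\<Sum>r \<in> {1..<i} \<union> ({i..i + n - 1} \<union> {i + n..m + n - 1}). T r) = (\<Sum>r \<in> {1..<i}. T r) + (\<Sum>r \<in> {i..i + n - 1} \<union> {i + n..m + n - 1}. T r)"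
      by (rule sum.union_disjoint[OF _ _ d1]) auto
    have e2: "(\<Sum>r \<in> {i..i + n - 1} \<union> {i + n..m + n - 1}. T r) = (\<Sum>r \<in> {i..i + n - 1}. T r) + (\<Sum>r \<in> {i + n..m + n - 1}. T r)"
      by (rule sum.union_disjoint[OF _ _ d2]) auto
    show ?thesis unfolding e1 e2 ..
  qed
  also have "(\<Sum>r \<in> {1..<i}. T r) = (\<Sum>s \<in> {1..<i}. cp m n i (f s) G)"
    by (rule sum.cong) (auto simp: T_def R0_def)
  also have "(\<Sum>r \<in> {i..i + n - 1}. T r) = (\<Sum>r \<in> {i..i + n - 1}. cp m n i (f i) (g (r - i + 1)))"
    by (rule sum.cong) (use assms in \<open>auto simp: T_def R0_def\<close>)
  also have "\<dots> = cp m n i (f i) (\<Sum>r \<in> {i..i + n - 1}. g (r - i + 1))"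
    by (rule cpsumR[symmetric]) (use assms in \<open>auto intro: dO_mem\<close>)
  also have "(\<Sum>r \<in> {i..i + n - 1}. g (r - i + 1)) = G"
    unfolding G_def
    by (rule sum.reindex_bij_witness[where i="\<lambda>s. s + i - 1" and j="\<lambda>r. r - i + 1"]) (use assms in auto)
  also have "(\<Sum>r \<in> {i + n..m + n - 1}. T r) = (\<Sum>r \<in> {i + n..m + n - 1}. cp m n i (f (r - n + 1)) G)"
    by (rule sum.cong) (use assms in \<open>auto simp: T_def R0_def\<close>)
  also have "\<dots> = (\<Sum>s \<in> {i + 1..m}. cp m n i (f s) G)"
    by (rule sum.reindex_bij_witness[where i="\<lambda>s. s + n - 1" and j="\<lambda>r. r - n + 1"]) (use assms in auto)
  also have "(\<Sum>s \<in> {1..<i}. cp m n i (f s) G) + (cp m n i (f i) G + (\<Sum>s \<in> {i + 1..m}. cp m n i (f s) G))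
      = (\<Sum>s \<in> {1..<i} \<union> ({i} \<union> {i + 1..m}). cp m n i (f s) G)"
  proof -
    have d1: "{1..<i} \<inter> ({i} \<union> {i + 1..m}) = {}" by auto
    have d2: "{i} \<inter> {i + 1..m} = {}" by auto
    have e1: "(\<Sum>s \<in> {1..<i} \<union> ({i} \<union> {i + 1..m}). cp m n i (f s) G) = (\<Sum>s \<in> {1..<i}. cp m n i (f s) G) + (\<Sum>s \<in> {i} \<union> {i + 1..m}. cp m n i (f s) G)"
      by (rule sum.union_disjoint[OF _ _ d1]) auto
    have e2: "(\<Sum>s \<in> {i} \<union> {i + 1..m}. cp m n i (f s) G) = (\<Sum>s \<in> {i}. cp m n i (f s) G) + (\<Sum>s \<in> {i + 1..m}. cp m n i (f s) G)"
      by (rule sum.union_disjoint[OF _ _ d2]) auto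
    show ?thesis unfolding e1 e2 by simp
  qed
  also have "{1..<i} \<union> ({i} \<union> {i + 1..m}) = {1..m}" using assms by auto
  also have "(\<Sum>s = 1..m. cp m n i (f s) G) = cp m n i (phi m f) (phi n g)"
    unfolding phi_def G_def[symmetric]
    by (rule cpsumL[symmetric]) (use assms GP in \<open>auto intro: dO_mem\<close>)
  finally show ?thesis .
qed


lemma phi_hom: "ns_operad_hom (dend_scale sc) (dend_O P) (dend_comp cp) (dend_unit u) sc P cp u phi"
  unfolding ns_operad_hom_def
proof (intro conjI allI impI ballI)
  show "phi n f \<in> P n" if "1 \<le> n" "f \<in> dend_O P n" for n f using phiP that by blast
  show "phi n (f + g) = phi n f + phi n g" for n f g by (rule phi_add)
  show "phi n (dend_scale sc c f) = sc c (phi n f)" for n c f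
    by (simp add: phi_def dend_scale_def module.scale_sum_right[OF md])
  show "phi (m + n - 1) (dend_comp cp m n i f g) = cp m n i (phi m f) (phi n g)"
    if "1 \<le> n" "1 \<le> i" "i \<le> m" "f \<in> dend_O P m" "g \<in> dend_O P n" for m n i f g
    using phi_comp that by blast
  show "phi 1 (dend_unit u) = u" by (simp add: phi_def dend_unit_def)
qed

lemma dO_zero: "1 \<le> n \<Longrightarrow> 0 \<in> dend_O P n"
  by (auto simp: dend_O_def P0)
lemma dO_add: "1 \<le> n \<Longrightarrow> f \<in> dend_O P n \<Longrightarrow> g \<in> dend_O P n \<Longrightarrow> f + g \<in> dend_O P n"
  by (auto simp: dend_O_def Padd)
lemma dO_neg: "1 \<le> n \<Longrightarrow> f \<in> dend_O P n \<Longrightarrow> - f \<in> dend_O P n"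
  by (auto simp: dend_O_def Pneg)
lemma dO_diff: "1 \<le> n \<Longrightarrow> f \<in> dend_O P n \<Longrightarrow> g \<in> dend_O P n \<Longrightarrow> f - g \<in> dend_O P n"
  using dO_add[of n f "- g"] dO_neg[of n g] by simp
lemma dO_sgnx: "1 \<le> n \<Longrightarrow> f \<in> dend_O P n \<Longrightarrow> sgnx e f \<in> dend_O P n"
  by (simp add: sgnx_def dO_neg)
lemma dO_sum: "1 \<le> n \<Longrightarrow> (\<And>x. x \<in> S \<Longrightarrow> F x \<in> dend_O P n) \<Longrightarrow> (\<Sum>x\<in>S. F x) \<in> dend_O P n"
  by (induct S rule: infinite_finite_induct) (auto simp: dO_zero dO_add)

lemma dpP: "pl \<in> P 2 \<Longrightarrow> pr \<in> P 2 \<Longrightarrow> dend_pair pl pr \<in> dend_O P 2"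
  by (auto simp: dend_O_def dend_pair_def)
lemma phi_dp: "phi 2 (dend_pair pl pr) = pl + pr"
  by (simp add: phi_def dend_pair_def numeral_2_eq_2)

lemma gbr_dO: assumes "1 \<le> m" "1 \<le> n" "f \<in> dend_O P m" "g \<in> dend_O P n"
  shows "gbr (dend_comp cp) m n f g \<in> dend_O P (m + n - 1)"
proof -
  have "n + m - 1 = m + n - 1" by simp
  then have B: "dend_comp cp n m i g f \<in> dend_O P (m + n - 1)" if "1 \<le> i" "i \<le> n" for i
    using dcP[of m i n g f] assms that by auto
  show ?thesis unfolding gbr_def
    using assms
    by (intro dO_diff dO_sgnx dO_sum dcP B) auto
qed

lemma phi_gbr: assumes "1 \<le> m" "1 \<le> n" "f \<in> dend_O P m" "g \<in> dend_O P n"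
  shows "phi (m + n - 1) (gbr (dend_comp cp) m n f g) = gbr cp m n (phi m f) (phi n g)"
proof -
  have A: "phi (m + n - 1) (dend_comp cp m n i f g) = cp m n i (phi m f) (phi n g)" if "1 \<le> i" "i \<le> m" for i
    using phi_comp[of n i m f g] assms that by auto
  have "n + m - 1 = m + n - 1" by simp
  then have B: "phi (m + n - 1) (dend_comp cp n m i g f) = cp n m i (phi n g) (phi m f)" if "1 \<le> i" "i \<le> n" for i
    using phi_comp[of m i n g f] assms that by auto
  have SA: "(\<Sum>i = 1..m. sgnx ((n - 1) * (i - 1)) (phi (m + n - 1) (dend_comp cp m n i f g)))
     = (\<Sum>i = 1..m. sgnx ((n - 1) * (i - 1)) (cp m n i (phi m f) (phi n g)))"
    by (intro sum.cong refl arg_cong[where f="sgnx _"] A) auto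
  have SB: "(\<Sum>i = 1..n. sgnx ((m - 1) * (i - 1)) (phi (m + n - 1) (dend_comp cp n m i g f)))
     = (\<Sum>i = 1..n. sgnx ((m - 1) * (i - 1)) (cp n m i (phi n g) (phi m f)))"
    by (intro sum.cong refl arg_cong[where f="sgnx _"] B) auto
  show ?thesis
    unfolding gbr_def phi_diff phi_sgnx phi_sum SA SB ..
qed

lemma phi_cupp: assumes "1 \<le> m" "1 \<le> n" "f \<in> dend_O P m" "g \<in> dend_O P n"
  and pp: "pp \<in> dend_O P 2"
  shows "phi (m + n) (cupp (dend_comp cp) pp m n f g) = cupp cp (phi 2 pp) m n (phi m f) (phi n g)"
    and "cupp (dend_comp cp) pp m n f g \<in> dend_O P (m + n)"
proof -
  have X: "dend_comp cp 2 n 2 pp g \<in> dend_O P (n + 1)"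
    using dcP[of n 2 2 pp g] assms by auto
  have "phi (n + 1) (dend_comp cp 2 n 2 pp g) = cp 2 n 2 (phi 2 pp) (phi n g)"
    using phi_comp[of n 2 2 pp g] assms by auto
  moreover have "phi (m + n) (dend_comp cp (n + 1) m 1 (dend_comp cp 2 n 2 pp g) f)
     = cp (n + 1) m 1 (phi (n + 1) (dend_comp cp 2 n 2 pp g)) (phi m f)"
    using phi_comp[of m 1 "n + 1" _ f, OF _ _ _ X] assms by (simp add: add.commute)
  ultimately show "phi (m + n) (cupp (dend_comp cp) pp m n f g) = cupp cp (phi 2 pp) m n (phi m f) (phi n g)"
    unfolding cupp_def phi_sgnx by simp
  have "dend_comp cp (n + 1) m 1 (dend_comp cp 2 n 2 pp g) f \<in> dend_O P (m + n)"
    using dcP[of m 1 "n + 1" _ f, OF _ _ _ X] assms by (simp add: add.commute)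
  then show "cupp (dend_comp cp) pp m n f g \<in> dend_O P (m + n)"
    unfolding cupp_def using assms by (intro dO_sgnx) auto
qed

lemma gbr_addR: assumes "1 \<le> m" "1 \<le> n" "f \<in> P m" "g \<in> P n" "g' \<in> P n"
  shows "gbr cp m n f (g + g') = gbr cp m n f g + gbr cp m n f g'"
proof -
  have A: "cp m n i f (g + g') = cp m n i f g + cp m n i f g'" if "1 \<le> i" "i \<le> m" for i
    using cpR assms that by auto
  have B: "cp n m i (g + g') f = cp n m i g f + cp n m i g' f" if "1 \<le> i" "i \<le> n" for i
    using cpL assms that by auto
  show ?thesis unfolding gbr_def
    by (simp add: A B sgnx_add sum.distrib)
qed

lemma gbr_negR: assumes "1 \<le> m" "1 \<le> n" "f \<in> P m" "g \<in> P n"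
  shows "gbr cp m n f (- g) = - gbr cp m n f g"
proof -
  have A: "cp m n i f (- g) = - cp m n i f g" if "1 \<le> i" "i \<le> m" for i
    using cpnegR assms that by auto
  have B: "cp n m i (- g) f = - cp n m i g f" if "1 \<le> i" "i \<le> n" for i
    using cpnegL assms that by auto
  show ?thesis unfolding gbr_def
    by (simp add: A B sgnx_neg sum_negf)
qed


lemma cob_phi: assumes n: "1 \<le> n" and pl: "pl \<in> P 2" and pr: "pr \<in> P 2"
  and b: "b \<in> coboundaries (dend_O P) (dend_comp cp) (dend_pair pl pr) n"
  shows "phi n b \<in> coboundaries P cp (pl + pr) n"
proof (cases "2 \<le> n")
  case True
  then obtain h where h: "h \<in> dend_O P (n - 1)" and bh: "b = gbr (dend_comp cp) 2 (n - 1) (dend_pair pl pr) h"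
    using b unfolding coboundaries_def delta_def by auto
  have "phi (2 + (n - 1) - 1) b = gbr cp 2 (n - 1) (phi 2 (dend_pair pl pr)) (phi (n - 1) h)"
    unfolding bh using True h dpP[OF pl pr] by (intro phi_gbr) auto
  moreover have "2 + (n - 1) - 1 = n" using True by simp
  ultimately have "phi n b = delta cp (pl + pr) (n - 1) (phi (n - 1) h)"
    by (simp add: phi_dp delta_def)
  moreover have "phi (n - 1) h \<in> P (n - 1)" using phiP h True by auto
  ultimately show ?thesis using True unfolding coboundaries_def by auto
next
  case False
  then show ?thesis using b unfolding coboundaries_def by (simp add: phi_zero)
qed

lemma cob_add: assumes p: "p \<in> P 2" and "a \<in> coboundaries P cp p n" "b \<in> coboundaries P cp p n"
  shows "a + b \<in> coboundaries P cp p n"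
proof (cases "2 \<le> n")
  case True
  then obtain h h' where "h \<in> P (n - 1)" "h' \<in> P (n - 1)" "a = delta cp p (n - 1) h" "b = delta cp p (n - 1) h'"
    using assms unfolding coboundaries_def by auto
  moreover then have "a + b = delta cp p (n - 1) (h + h')"
    unfolding delta_def using True p by (simp add: gbr_addR)
  moreover have "h + h' \<in> P (n - 1)" using calculation True Padd by auto
  ultimately show ?thesis using True unfolding coboundaries_def by auto
next
  case False
  then show ?thesis using assms unfolding coboundaries_def by simp
qed

lemma cob_neg: assumes p: "p \<in> P 2" and "a \<in> coboundaries P cp p n"
  shows "- a \<in> coboundaries P cp p n"
proof (cases "2 \<le> n")
  case True
  then obtain h where "h \<in> P (n - 1)" "a = delta cp p (n - 1) h"
    using assms unfolding coboundaries_def by auto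
  moreover then have "- a = delta cp p (n - 1) (- h)"
    unfolding delta_def using True p by (simp add: gbr_negR)
  moreover have "- h \<in> P (n - 1)" using calculation True Pneg by auto
  ultimately show ?thesis using True unfolding coboundaries_def by auto
next
  case False
  then show ?thesis using assms unfolding coboundaries_def by simp
qed

lemma cob_ne: "1 \<le> n \<Longrightarrow> \<exists>b. b \<in> coboundaries (dend_O P) (dend_comp cp) pp n"
proof -
  assume n: "1 \<le> n"
  show ?thesis
  proof (cases "2 \<le> n")
    case True
    then have "(0::nat \<Rightarrow> 'a) \<in> dend_O P (n - 1)" using dO_zero[of "n - 1"] by simp
    then show ?thesis using True unfolding coboundaries_def by auto
  qed (auto simp: coboundaries_def)
qed

lemma wd: assumes n: "1 \<le> n" and pl: "pl \<in> P 2" and pr: "pr \<in> P 2"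
  and f: "f \<in> dend_O P n" and f0: "f0 \<in> dend_O P n"
  and eq: "coh_class (dend_O P) (dend_comp cp) (dend_pair pl pr) n f0 = coh_class (dend_O P) (dend_comp cp) (dend_pair pl pr) n f"
  shows "coh_class P cp (pl + pr) n (phi n f0) = coh_class P cp (pl + pr) n (phi n f)"
proof -
  have p: "pl + pr \<in> P 2" using Padd pl pr by auto
  obtain b0 where b0: "b0 \<in> coboundaries (dend_O P) (dend_comp cp) (dend_pair pl pr) n"
    using cob_ne n by blast
  have "f0 + b0 \<in> coh_class (dend_O P) (dend_comp cp) (dend_pair pl pr) n f0"
    unfolding coh_class_def using b0 by blast
  then have "f0 + b0 \<in> coh_class (dend_O P) (dend_comp cp) (dend_pair pl pr) n f"
    using eq by simp
  then obtain b where b: "b \<in> coboundaries (dend_O P) (dend_comp cp) (dend_pair pl pr) n" and e: "f0 + b0 = f + b"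
    unfolding coh_class_def by auto
  have "phi n f0 + phi n b0 = phi n f + phi n b" using e phi_add by metis
  then have d: "phi n f0 - phi n f = phi n b + - phi n b0"
    by (simp add: algebra_simps)
  have "phi n f0 - phi n f \<in> coboundaries P cp (pl + pr) n"
    unfolding d using cob_phi[OF n pl pr b] cob_phi[OF n pl pr b0] cob_add[OF p] cob_neg[OF p] by blast
  then show ?thesis unfolding coh_class_def
    by (rule diff_class_eq) (use cob_add[OF p] cob_neg[OF p] in auto)
qed

end
theorem proposition4p6:
  fixes sc :: "'k::comm_ring_1 \<Rightarrow> 'a::ab_group_add \<Rightarrow> 'a"
    and P :: "nat \<Rightarrow> 'a set"
    and cp :: "nat \<Rightarrow> nat \<Rightarrow> nat \<Rightarrow> 'a \<Rightarrow> 'a \<Rightarrow> 'a"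
    and u :: 'a
  assumes char0: "CHAR('k) = 0"
    and op: "ns_operad sc P cp u"
  shows "ns_operad_hom (dend_scale sc) (dend_O P) (dend_comp cp) (dend_unit u) sc P cp u phi
    \<and> (\<forall>pl pr. dendriform_mult P cp pl pr \<longrightarrow>
         (\<exists>Phi :: nat \<Rightarrow> (nat \<Rightarrow> 'a) set \<Rightarrow> 'a set.
            (\<forall>n\<ge>1. \<forall>X\<in>cohomology (dend_O P) (dend_comp cp) (dend_pair pl pr) n.
               Phi n X \<in> cohomology P cp (pl + pr) n) \<and>
            (\<forall>n\<ge>1. \<forall>f\<in>cocycles (dend_O P) (dend_comp cp) (dend_pair pl pr) n.
               Phi n (coh_class (dend_O P) (dend_comp cp) (dend_pair pl pr) n f)
                 = coh_class P cp (pl + pr) n (phi n f)) \<and>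
            (\<forall>m\<ge>1. \<forall>n\<ge>1.
               \<forall>f\<in>cocycles (dend_O P) (dend_comp cp) (dend_pair pl pr) m.
               \<forall>g\<in>cocycles (dend_O P) (dend_comp cp) (dend_pair pl pr) n.
               Phi (m + n) (coh_class (dend_O P) (dend_comp cp) (dend_pair pl pr) (m + n)
                              (cupp (dend_comp cp) (dend_pair pl pr) m n f g))
                 = coh_class P cp (pl + pr) (m + n) (cupp cp (pl + pr) m n (phi m f) (phi n g))
             \<and> Phi (m + n - 1) (coh_class (dend_O P) (dend_comp cp) (dend_pair pl pr) (m + n - 1)
                              (gbr (dend_comp cp) m n f g))
                 = coh_class P cp (pl + pr) (m + n - 1) (gbr cp m n (phi m f) (phi n g)))))"
proof (intro conjI allI impI)
  show "ns_operad_hom (dend_scale sc) (dend_O P) (dend_comp cp) (dend_unit u) sc P cp u phi"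
    by (rule phi_hom[OF op])
  fix pl pr assume dm: "dendriform_mult P cp pl pr"
  have pl: "pl \<in> P 2" and pr: "pr \<in> P 2" using dm unfolding dendriform_mult_def by auto
  have pp: "dend_pair pl pr \<in> dend_O P 2" using dpP[OF op pl pr] .
  define Phi where "Phi n X = coh_class P cp (pl + pr) n (phi n (SOME f. f \<in> dend_O P n \<and>
     X = coh_class (dend_O P) (dend_comp cp) (dend_pair pl pr) n f))" for n X
  have key: "Phi n (coh_class (dend_O P) (dend_comp cp) (dend_pair pl pr) n f) = coh_class P cp (pl + pr) n (phi n f)"
    if n: "1 \<le> n" and f: "f \<in> dend_O P n" for n f
  proof -
    define f0 where "f0 = (SOME g. g \<in> dend_O P n \<and>
     coh_class (dend_O P) (dend_comp cp) (dend_pair pl pr) n f = coh_class (dend_O P) (dend_comp cp) (dend_pair pl pr) n g)"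
    have "f0 \<in> dend_O P n \<and>
     coh_class (dend_O P) (dend_comp cp) (dend_pair pl pr) n f = coh_class (dend_O P) (dend_comp cp) (dend_pair pl pr) n f0"
      unfolding f0_def by (rule someI[where x=f]) (use f in simp)
    then show ?thesis unfolding Phi_def f0_def[symmetric]
      using wd[OF op n pl pr f] by auto
  qed
  have cocP: "f \<in> dend_O P n" if "f \<in> cocycles (dend_O P) (dend_comp cp) (dend_pair pl pr) n" for f n
    using that unfolding cocycles_def by auto
  show "\<exists>Phi :: nat \<Rightarrow> (nat \<Rightarrow> 'a) set \<Rightarrow> 'a set.
            (\<forall>n\<ge>1. \<forall>X\<in>cohomology (dend_O P) (dend_comp cp) (dend_pair pl pr) n.
               Phi n X \<in> cohomology P cp (pl + pr) n) \<and>
            (\<forall>n\<ge>1. \<forall>f\<in>cocycles (dend_O P) (dend_comp cp) (dend_pair pl pr) n.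
               Phi n (coh_class (dend_O P) (dend_comp cp) (dend_pair pl pr) n f)
                 = coh_class P cp (pl + pr) n (phi n f)) \<and>
            (\<forall>m\<ge>1. \<forall>n\<ge>1.
               \<forall>f\<in>cocycles (dend_O P) (dend_comp cp) (dend_pair pl pr) m.
               \<forall>g\<in>cocycles (dend_O P) (dend_comp cp) (dend_pair pl pr) n.
               Phi (m + n) (coh_class (dend_O P) (dend_comp cp) (dend_pair pl pr) (m + n)
                              (cupp (dend_comp cp) (dend_pair pl pr) m n f g))
                 = coh_class P cp (pl + pr) (m + n) (cupp cp (pl + pr) m n (phi m f) (phi n g))
             \<and> Phi (m + n - 1) (coh_class (dend_O P) (dend_comp cp) (dend_pair pl pr) (m + n - 1)
                              (gbr (dend_comp cp) m n f g))
                 = coh_class P cp (pl + pr) (m + n - 1) (gbr cp m n (phi m f) (phi n g)))"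
  proof (intro exI[of _ Phi] conjI allI impI ballI)
    fix n X assume n: "1 \<le> n" and X: "X \<in> cohomology (dend_O P) (dend_comp cp) (dend_pair pl pr) n"
    then obtain f where f: "f \<in> cocycles (dend_O P) (dend_comp cp) (dend_pair pl pr) n"
      and Xf: "X = coh_class (dend_O P) (dend_comp cp) (dend_pair pl pr) n f"
      unfolding cohomology_def by auto
    have fO: "f \<in> dend_O P n" and d0: "gbr (dend_comp cp) 2 n (dend_pair pl pr) f = 0"
      using f unfolding cocycles_def delta_def by auto
    have "phi (2 + n - 1) (gbr (dend_comp cp) 2 n (dend_pair pl pr) f) = gbr cp 2 n (pl + pr) (phi n f)"
      using phi_gbr[OF op _ n pp fO] phi_dp[OF op, of pl pr] by simp
    then have "delta cp (pl + pr) n (phi n f) = 0" unfolding delta_def d0 by (simp add: phi_zero)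
    moreover have "phi n f \<in> P n" using phiP[OF op n fO] .
    ultimately have "phi n f \<in> cocycles P cp (pl + pr) n" unfolding cocycles_def by auto
    then show "Phi n X \<in> cohomology P cp (pl + pr) n"
      unfolding Xf key[OF n fO] cohomology_def by blast
  next
    fix n f assume n: "1 \<le> n" and f: "f \<in> cocycles (dend_O P) (dend_comp cp) (dend_pair pl pr) n"
    show "Phi n (coh_class (dend_O P) (dend_comp cp) (dend_pair pl pr) n f) = coh_class P cp (pl + pr) n (phi n f)"
      using key[OF n cocP[OF f]] .
  next
    fix m n f g assume m: "1 \<le> m" and n: "1 \<le> n"
      and f: "f \<in> cocycles (dend_O P) (dend_comp cp) (dend_pair pl pr) m"
      and g: "g \<in> cocycles (dend_O P) (dend_comp cp) (dend_pair pl pr) n"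
    note fO = cocP[OF f] and gO = cocP[OF g]
    have mn: "1 \<le> m + n" "1 \<le> m + n - 1" using m n by auto
    show "Phi (m + n) (coh_class (dend_O P) (dend_comp cp) (dend_pair pl pr) (m + n)
                              (cupp (dend_comp cp) (dend_pair pl pr) m n f g))
                 = coh_class P cp (pl + pr) (m + n) (cupp cp (pl + pr) m n (phi m f) (phi n g))"
      using key[OF mn(1) phi_cupp(2)[OF op m n fO gO pp]] phi_cupp(1)[OF op m n fO gO pp]
      by (simp add: phi_dp[OF op])
    show "Phi (m + n - 1) (coh_class (dend_O P) (dend_comp cp) (dend_pair pl pr) (m + n - 1)
                              (gbr (dend_comp cp) m n f g))
                 = coh_class P cp (pl + pr) (m + n - 1) (gbr cp m n (phi m f) (phi n g))"
      using key[OF mn(2) gbr_dO[OF op m n fO gO]] phi_gbr[OF op m n fO gO] by simp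
  qed
qed

end
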